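(* For any $n\ge0$, $\mathsf{R}\subseteq[n]$ and $r\in\mathcal{Y}_n$, $\gamma(r)|_{\mathsf{R}}=\gamma(r|_{\mathsf{R}})$.
   Context: Permutations in one-line notation; $\mathrm{st}(a_1,..,a_p)$ is the permutation with the same relative order as distinct integers $a_i$; $\mathrm{id}_0$ is the empty permutation. For $\sigma\in\mathfrak{S}_p,\tau\in\mathfrak{S}_q$, $\sigma\vee\tau=(\sigma(1)+q,..,\sigma(p)+q,p+q+1,\tau(1),..,\tau(q))$. Trees: $\mathcal{Y}_n$ = rooted planar binary trees with $n$ internal nodes, $\mathcal{Y}_0=\{|\}$; $s\vee t$ = root with left subtree $s$, right subtree $t$; each $t\neq|$ is uniquely $t_l\vee t_r$. $\lambda(\mathrm{id}_0)=|$, $\lambda(\sigma)=\lambda(\mathrm{st}(\sigma(1..j-1)))\vee\lambda(\mathrm{st}(\sigma(j+1..n)))$ where $j=\sigma^{-1}(n)$; $\gamma(|)=\mathrm{id}_0$, $\gamma(t)=\gamma(t_l)\vee\gamma(t_r)$. For $\mathsf{R}=\{R_1<\dots<R_p\}\subseteq[n]$ and $\rho\in\mathfrak{S}_n$, $\rho|_{\mathsf{R}}=\mathrm{st}(\rho(R_1),\dots,\rho(R_p))$; for $r\in\mathcal{Y}_n$, $r|_{\mathsf{R}}=\lambda(\gamma(r)|_{\mathsf{R}})$. *)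

theory Defs
  imports Main
begin

text \<open>Permutations in one-line notation are lists of naturals; a permutation of [n]
  is a list containing 1..n exactly once.\<close>

definition st :: "nat list \<Rightarrow> nat list" where
  "st xs = map (\<lambda>x. card {y \<in> set xs. y \<le> x}) xs"

lemma length_st[simp]: "length (st xs) = length xs"
  by (simp add: st_def)

definition pvee :: "nat list \<Rightarrow> nat list \<Rightarrow> nat list" where
  "pvee \<sigma> \<tau> = map (\<lambda>x. x + length \<tau>) \<sigma> @ [length \<sigma> + length \<tau> + 1] @ \<tau>"

datatype tree = Leaf | Node tree tree

fun nodes :: "tree \<Rightarrow> nat" where
  "nodes Leaf = 0"
| "nodes (Node l r) = nodes l + nodes r + 1"

definition Y :: "nat \<Rightarrow> tree set" where
  "Y n = {t. nodes t = n}"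

text \<open>j is the (0-based) position of the value n = length xs; the min only matters
  for non-permutations and guarantees termination.\<close>
function lam :: "nat list \<Rightarrow> tree" where
  "lam xs = (if xs = [] then Leaf else
     (let j = min (length (takeWhile (\<lambda>x. x \<noteq> length xs) xs)) (length xs - 1)
      in Node (lam (st (take j xs))) (lam (st (drop (Suc j) xs)))))"
  by pat_completeness auto
termination
  by (relation "measure length") (auto simp: min_less_iff_disj)

fun gam :: "tree \<Rightarrow> nat list" where
  "gam Leaf = []"
| "gam (Node l r) = pvee (gam l) (gam r)"

definition prestr :: "nat list \<Rightarrow> nat set \<Rightarrow> nat list" where
  "prestr \<rho> R = st (map (\<lambda>i. \<rho> ! (i - 1)) (sorted_list_of_set R))"

definition trestr :: "tree \<Rightarrow> nat set \<Rightarrow> tree" where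
  "trestr r R = lam (prestr (gam r) R)"

end

theory Submission
  imports Defs
begin

definition av :: "nat list \<Rightarrow> bool" where
  "av xs \<longleftrightarrow> (\<forall>i j k. i < j \<and> j < k \<and> k < length xs \<longrightarrow> \<not> (xs!i < xs!k \<and> xs!k < xs!j))"

lemma card_le_less:
  assumes "finite S" "x \<in> S" "x' \<in> S"
  shows "card {y\<in>S. y \<le> x} < card {y\<in>S. y \<le> (x'::nat)} \<longleftrightarrow> x < x'"
proof
  assume "x < x'"
  then have "{y\<in>S. y \<le> x} \<subset> {y\<in>S. y \<le> x'}" using assms
  proof -
    have "x' \<in> {y\<in>S. y \<le> x'}" "x' \<notin> {y\<in>S. y \<le> x}" using assms \<open>x < x'\<close> by auto
    moreover have "{y\<in>S. y \<le> x} \<subseteq> {y\<in>S. y \<le> x'}" using \<open>x < x'\<close> by auto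
    ultimately show ?thesis by blast
  qed
  then show "card {y\<in>S. y \<le> x} < card {y\<in>S. y \<le> x'}"
    using assms by (intro psubset_card_mono) auto
next
  assume h: "card {y\<in>S. y \<le> x} < card {y\<in>S. y \<le> x'}"
  show "x < x'"
  proof (rule ccontr)
    assume "\<not> x < x'"
    then have "{y\<in>S. y \<le> x'} \<subseteq> {y\<in>S. y \<le> x}" by auto
    then have "card {y\<in>S. y \<le> x'} \<le> card {y\<in>S. y \<le> x}"
      using assms by (intro card_mono) auto
    then show False using h by simp
  qed
qed

lemma st_nth: "i < length xs \<Longrightarrow> st xs ! i = card {y \<in> set xs. y \<le> xs!i}"
  by (simp add: st_def)

lemma st_less:
  assumes "i < length xs" "j < length xs"
  shows "st xs ! i < st xs ! j \<longleftrightarrow> xs!i < xs!j"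
  using assms by (simp add: st_nth card_le_less)

lemma distinct_st:
  assumes "distinct xs" shows "distinct (st xs)"
  unfolding distinct_conv_nth
proof (intro allI impI)
  fix i j assume h: "i < length (st xs)" "j < length (st xs)" "i \<noteq> j"
  then have "xs!i \<noteq> xs!j" using assms by (simp add: nth_eq_iff_index_eq)
  then have "xs!i < xs!j \<or> xs!j < xs!i" by auto
  then show "st xs ! i \<noteq> st xs ! j" using st_less[of i xs j] st_less[of j xs i] h by auto
qed

lemma set_st:
  assumes "distinct xs" shows "set (st xs) = {1..length xs}"
proof -
  have sub: "set (st xs) \<subseteq> {1..length xs}"
  proof
    fix z assume "z \<in> set (st xs)"
    then obtain x where x: "x \<in> set xs" "z = card {y \<in> set xs. y \<le> x}"
      by (auto simp: st_def)
    have "card {y \<in> set xs. y \<le> x} > 0" using x(1) by (subst card_gt_0_iff) auto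
    moreover have "card {y \<in> set xs. y \<le> x} \<le> card (set xs)" by (rule card_mono) auto
    ultimately show "z \<in> {1..length xs}" using x assms by (simp add: distinct_card)
  qed
  have "card (set (st xs)) = length xs" using distinct_st[OF assms] by (simp add: distinct_card)
  then show ?thesis using sub by (intro card_subset_eq) auto
qed

lemma av_st: "av xs \<Longrightarrow> av (st xs)"
  unfolding av_def by (auto simp: st_less)

lemma st_id:
  assumes "set xs = {1..length xs}" shows "st xs = xs"
  unfolding st_def assms
proof (rule map_idI)
  fix x assume "x \<in> set xs"
  then have "x \<le> length xs" using assms by auto
  then have "{y \<in> {1..length xs}. y \<le> x} = {1..x}" by auto
  then show "card {y \<in> {1..length xs}. y \<le> x} = x" by simp
qed

lemma st_map_mono:
  assumes "\<forall>x\<in>set xs. \<forall>y\<in>set xs. x < y \<longrightarrow> f x < (f y::nat)"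
  shows "st (map f xs) = st xs"
  unfolding st_def map_map o_def set_map
proof (rule map_cong[OF refl])
  fix x assume x: "x \<in> set xs"
  have inj: "inj_on f (set xs)" using assms
    by (metis inj_onI less_irrefl nat_neq_iff)
  have le: "\<And>y. y \<in> set xs \<Longrightarrow> f y \<le> f x \<longleftrightarrow> y \<le> x" using assms x
    by (metis le_less not_less inj inj_on_eq_iff)
  have "{y \<in> f ` set xs. y \<le> f x} = f ` {y \<in> set xs. y \<le> x}" using le by auto
  moreover have "card (f ` {y \<in> set xs. y \<le> x}) = card {y \<in> set xs. y \<le> x}"
    using inj by (intro card_image) (auto intro: inj_on_subset)
  ultimately show "card {y \<in> f ` set xs. y \<le> f x} = card {y \<in> set xs. y \<le> x}" by simp
qed

lemma av_shift: "av xs \<Longrightarrow> av (map (\<lambda>x. x + q) xs)"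
  unfolding av_def by auto

lemma av_app:
  assumes "av A" "av B" "\<forall>a\<in>set A. \<forall>b\<in>set B. b < a" "\<forall>a\<in>set A. a < m" "\<forall>b\<in>set B. b < m"
  shows "av (A @ m # B)"
  unfolding av_def
proof (intro allI impI notI)
  fix i j k assume ijk: "i < j \<and> j < k \<and> k < length (A @ m # B)"
    and c: "(A @ m # B) ! i < (A @ m # B) ! k \<and> (A @ m # B) ! k < (A @ m # B) ! j"
  let ?l = "length A"
  consider "k < ?l" | "k = ?l" | "k > ?l" "i \<le> ?l" | "i > ?l" by linarith
  then show False
  proof cases
    case 1
    then show False using assms(1) ijk c unfolding av_def by (auto simp: nth_append)
  next
    case 2
    then have "j < ?l" using ijk by auto
    then have "A ! j \<in> set A" by simp
    then have "A ! j < m" using assms(4) by auto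
    then show False using 2 c \<open>j < ?l\<close> by (simp add: nth_append)
  next
    case 3
    have kb: "(A @ m # B) ! k \<in> set B" using 3 ijk
      by (auto simp: nth_append nth_Cons split: nat.splits)
    have "(A @ m # B) ! i \<in> set A \<or> (A @ m # B) ! i = m" using 3
      by (cases "i < ?l") (auto simp: nth_append)
    then show False using kb c assms(3,5) by fastforce
  next
    case 4
    define i' where "i' = i - Suc ?l"
    define j' where "j' = j - Suc ?l"
    define k' where "k' = k - Suc ?l"
    have e: "(A @ m # B) ! t = B ! (t - Suc ?l)" if lt: "t > ?l" for t
    proof -
      obtain d where "t = Suc (?l + d)" using less_imp_Suc_add[OF lt] by blast
      then have d: "t = ?l + Suc d" by simp
      have "(A @ m # B) ! (?l + Suc d) = B ! d" by (simp only: nth_append_length_plus nth_Cons_Suc)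
      moreover have "t - Suc ?l = d" using d by simp
      ultimately show ?thesis using d by simp
    qed
    have "i' < j' \<and> j' < k' \<and> k' < length B" using 4 ijk unfolding i'_def j'_def k'_def by auto
    moreover have "B!i' < B!k' \<and> B!k' < B!j'" using c e[of i] e[of j] e[of k] 4 ijk
      unfolding i'_def j'_def k'_def by auto
    ultimately show False using assms(2) unfolding av_def by blast
  qed
qed

lemma gam_props: "length (gam r) = nodes r \<and> set (gam r) = {1..nodes r} \<and> distinct (gam r) \<and> av (gam r)"
proof (induction r)
  case Leaf
  then show ?case by (simp add: av_def)
next
  case (Node l r)
  let ?s = "gam l" let ?t = "gam r" let ?p = "nodes l" let ?q = "nodes r"
  have g: "gam (Node l r) = map (\<lambda>x. x + ?q) ?s @ (?p + ?q + 1) # ?t"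
    using Node by (simp add: pvee_def)
  have s1: "set (map (\<lambda>x. x + ?q) ?s) = {?q+1..?p+?q}" using Node
    by (auto simp: image_iff intro!: bexI[where x="_ - ?q"])
  have "set (gam (Node l r)) = {1..?p+?q+1}" unfolding g set_append s1 using Node by auto
  moreover have "distinct (gam (Node l r))" unfolding g using Node s1
    by (auto simp: distinct_map inj_on_def)
  moreover have "av (gam (Node l r))" unfolding g
    using Node s1 by (intro av_app av_shift) auto
  ultimately show ?case using Node g by simp
qed

lemma sub_props:
  assumes "distinct \<rho>" "av \<rho>" "R \<subseteq> {1..length \<rho>}"
  shows "distinct (map (\<lambda>i. \<rho> ! (i - 1)) (sorted_list_of_set R)) \<and>
         av (map (\<lambda>i. \<rho> ! (i - 1)) (sorted_list_of_set R))"
proof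
  have fin: "finite R" using assms(3) finite_subset by blast
  have "inj_on (\<lambda>i. \<rho> ! (i - 1)) R"
  proof (rule inj_onI)
    fix x y assume xy: "x \<in> R" "y \<in> R"
      "\<rho> ! (x - 1) = \<rho> ! (y - 1)"
    have "x \<in> {1..length \<rho>}" "y \<in> {1..length \<rho>}" using xy(1,2) assms(3) by blast+
    then have "x - 1 < length \<rho>" "y - 1 < length \<rho>" "x \<ge> 1" "y \<ge> 1"
      by auto
    then show "x = y" using assms(1) xy by (simp add: nth_eq_iff_index_eq)
  qed
  then show "distinct (map (\<lambda>i. \<rho> ! (i - 1)) (sorted_list_of_set R))"
    by (simp add: distinct_map fin)
  let ?L = "sorted_list_of_set R"
  have srt: "sorted_wrt (<) ?L" by simp
  have inR: "\<And>a. a < length ?L \<Longrightarrow> ?L ! a \<in> R" using fin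
    by (metis nth_mem set_sorted_list_of_set)
  show "av (map (\<lambda>i. \<rho> ! (i - 1)) ?L)"
    unfolding av_def
  proof (intro allI impI)
    fix a b c assume h: "a < b \<and> b < c \<and> c < length (map (\<lambda>i. \<rho> ! (i - 1)) ?L)"
    have lt: "?L!a < ?L!b" "?L!b < ?L!c" using h srt by (auto simp: sorted_wrt_iff_nth_less)
    have r: "?L!a \<in> R" "?L!c \<in> R" using inR h by auto
    have "?L!a - 1 < ?L!b - 1 \<and> ?L!b - 1 < ?L!c - 1 \<and> ?L!c - 1 < length \<rho>"
    proof -
      have "?L!a \<ge> 1" "?L!c \<le> length \<rho>" using r assms(3) by auto
      then show ?thesis using lt by linarith
    qed
    then show "\<not> (map (\<lambda>i. \<rho> ! (i - 1)) ?L ! a < map (\<lambda>i. \<rho> ! (i - 1)) ?L ! c \<and>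
           map (\<lambda>i. \<rho> ! (i - 1)) ?L ! c < map (\<lambda>i. \<rho> ! (i - 1)) ?L ! b)"
      using assms(2)[unfolded av_def, rule_format, of "?L!a - 1" "?L!b - 1" "?L!c - 1"] h by simp
  qed
qed

lemma av_take: "av xs \<Longrightarrow> av (take n xs)"
  unfolding av_def by auto

lemma av_drop: "av xs \<Longrightarrow> av (drop n xs)"
  unfolding av_def
proof (intro allI impI)
  fix i j k assume a: "\<forall>i j k. i < j \<and> j < k \<and> k < length xs \<longrightarrow> \<not> (xs ! i < xs ! k \<and> xs ! k < xs ! j)"
    and h: "i < j \<and> j < k \<and> k < length (drop n xs)"
  then show "\<not> (drop n xs ! i < drop n xs ! k \<and> drop n xs ! k < drop n xs ! j)"
    using a[rule_format, of "n+i" "n+j" "n+k"] by auto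
qed

lemma av_split:
  assumes "av (A @ m # B)" "distinct (A @ m # B)" "\<forall>x\<in>set B. x < m"
    "a \<in> set A" "b \<in> set B"
  shows "b < a"
proof -
  obtain i where i: "i < length A" "A ! i = a" using assms(4) by (auto simp: in_set_conv_nth)
  obtain k where k: "k < length B" "B ! k = b" using assms(5) by (auto simp: in_set_conv_nth)
  have "\<not> ((A @ m # B) ! i < (A @ m # B) ! (length A + 1 + k) \<and>
          (A @ m # B) ! (length A + 1 + k) < (A @ m # B) ! length A)"
    using assms(1)[unfolded av_def, rule_format, of i "length A" "length A + 1 + k"] i k by simp
  then have "\<not> (a < b \<and> b < m)" using i k by (simp add: nth_append)
  moreover have "b < m" using assms(3,5) by auto
  moreover have "a \<noteq> b" using assms(2,4,5) by auto
  ultimately show ?thesis by auto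
qed

lemma length_takeWhile_less': "x \<in> set xs \<Longrightarrow> \<not> P x \<Longrightarrow> length (takeWhile P xs) < length xs"
  by (induction xs) auto

lemma gam_lam:
  "distinct \<pi> \<Longrightarrow> set \<pi> = {1..length \<pi>} \<Longrightarrow> av \<pi> \<Longrightarrow> gam (lam \<pi>) = \<pi>"
proof (induction "length \<pi>" arbitrary: \<pi> rule: less_induct)
  case less
  show ?case
  proof (cases "\<pi> = []")
    case True
    then show ?thesis by (simp add: lam.simps)
  next
    case False
    define m where "m = length \<pi>"
    have "m \<ge> 1" using False unfolding m_def by (cases \<pi>) auto
    then have mi: "m \<in> set \<pi>" using less.prems(2) unfolding m_def by auto
    define j where "j = length (takeWhile (\<lambda>x. x \<noteq> m) \<pi>)"
    have jl: "j < m" unfolding j_def m_def using mi by (intro length_takeWhile_less'[of m]) (auto simp: m_def)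
    have jm: "\<pi> ! j = m" unfolding j_def using nth_length_takeWhile[of "\<lambda>x. x \<noteq> m" \<pi>] jl
      unfolding j_def m_def by auto
    define A where "A = take j \<pi>"
    define B where "B = drop (Suc j) \<pi>"
    have lamp: "lam \<pi> = Node (lam (st A)) (lam (st B))"
      apply (subst lam.simps)
      using False jl unfolding A_def B_def j_def m_def by (simp add: Let_def)
    have pd: "\<pi> = A @ m # B" unfolding A_def B_def using jl jm id_take_nth_drop[of j \<pi>]
      unfolding m_def by simp
    have lenA: "length A = j" unfolding A_def using jl m_def by simp
    have lenm: "m = length A + length B + 1"
    proof -
      have "length \<pi> = length (A @ m # B)" using pd by (rule arg_cong)
      then show ?thesis unfolding m_def by simp
    qed
    have dist: "distinct (A @ m # B)" using less.prems(1) pd by simp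
    have setp: "set A \<union> set B = {1..m} - {m}"
    proof -
      have s1: "set \<pi> = {1..m}" using less.prems(2) unfolding m_def .
      have s2: "set \<pi> = insert m (set A \<union> set B)" using pd by (metis Un_insert_right set_append set_simps(2))
      have s3: "m \<notin> set A \<union> set B" using dist by simp
      show ?thesis using s1 s2 s3 by blast
    qed
    have ltm0: "x < m \<and> 1 \<le> x" if "x \<in> set A \<union> set B" for x
    proof -
      have "x \<in> {1..m} - {m}" using that setp by blast
      then show ?thesis by auto
    qed
    have ltm: "\<forall>x\<in>set B. x < m" "\<forall>x\<in>set A. x < m" using ltm0 by blast+
    have avp: "av (A @ m # B)" using less.prems(3) pd by simp
    have AB: "\<And>a b. a \<in> set A \<Longrightarrow> b \<in> set B \<Longrightarrow> b < a"
      using av_split[OF avp dist ltm(1)] by blast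
    have avA: "av A" and avB: "av B" unfolding A_def B_def using less.prems(3)
      by (auto intro: av_take av_drop)
    have dA: "distinct A" and dB: "distinct B" using dist by auto
    have disj: "set A \<inter> set B = {}" using dist by auto
    have setB: "set B = {1..length B}"
    proof (rule card_subset_eq)
      show "card (set B) = card {1..length B}" using dB by (simp add: distinct_card)
      show "set B \<subseteq> {1..length B}"
      proof
        fix x assume x: "x \<in> set B"
        have "{1..x} \<subseteq> set B"
        proof
          fix y assume y: "y \<in> {1..x}"
          then have "y \<in> {1..m} - {m}" using x ltm by auto
          then have "y \<in> set A \<union> set B" using setp by blast
          then show "y \<in> set B" using AB[of y x] x y by auto
        qed
        then have "card {1..x} \<le> card (set B)" by (intro card_mono) auto
        then have "x \<le> length B" using dB by (simp add: distinct_card)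
        moreover have "x \<ge> 1" using x ltm0 by blast
        ultimately show "x \<in> {1..length B}" by auto
      qed
    qed simp
    define b where "b = length B"
    have Agt: "\<forall>a\<in>set A. b < a"
    proof
      fix a assume a: "a \<in> set A"
      show "b < a"
      proof (rule ccontr)
        assume "\<not> b < a"
        moreover have "1 \<le> a" using a ltm0 by blast
        ultimately have "a \<in> {1..length B}" unfolding b_def by auto
        then have "a \<in> set B" using setB by blast
        then show False using a disj by auto
      qed
    qed
    have setA': "set (map (\<lambda>x. x - b) A) = {1..length A}"
    proof -
      have "set A = {b+1..m-1}"
      proof
        show "set A \<subseteq> {b+1..m-1}" using Agt ltm by fastforce
        show "{b+1..m-1} \<subseteq> set A"
        proof
          fix x assume x: "x \<in> {b+1..m-1}"
          then have "x \<in> {1..m} - {m}" by auto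
          then have "x \<in> set A \<union> set B" using setp by blast
          moreover have "x \<notin> set B" using x setB unfolding b_def by auto
          ultimately show "x \<in> set A" by blast
        qed
      qed
      then show ?thesis using lenm unfolding b_def
        by (auto simp: image_iff intro!: bexI[where x="_ + length B"])
    qed
    have stA: "st A = map (\<lambda>x. x - b) A"
    proof -
      have "st (map (\<lambda>x. x - b) A) = st A" using Agt by (intro st_map_mono) auto
      moreover have "st (map (\<lambda>x. x - b) A) = map (\<lambda>x. x - b) A"
        using setA' by (intro st_id) simp
      ultimately show ?thesis by simp
    qed
    have stB: "st B = B" using setB by (rule st_id)
    have IHA: "gam (lam (st A)) = st A"
      using less.hyps[of "st A"] lenA jl m_def dA avA
      by (simp add: distinct_st set_st av_st)
    have IHB: "gam (lam (st B)) = st B"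
      using less.hyps[of "st B"] lenm m_def dB avB
      by (simp add: distinct_st set_st av_st)
    have "map (\<lambda>x. x + b) (map (\<lambda>x. x - b) A) = A"
      using Agt by (induction A) auto
    then show ?thesis
      unfolding lamp using IHA IHB stA stB pd lenm b_def by (simp add: pvee_def)
  qed
qed

theorem lemma8p5:
  fixes n :: nat and R :: "nat set" and r :: tree
  assumes "R \<subseteq> {1..n}" and "r \<in> Y n"
  shows "prestr (gam r) R = gam (trestr r R)"
proof -
  have g: "length (gam r) = n" "distinct (gam r)" "av (gam r)"
    using gam_props[of r] assms(2) by (auto simp: Y_def)
  let ?s = "map (\<lambda>i. gam r ! (i - 1)) (sorted_list_of_set R)"
  have "distinct ?s \<and> av ?s" using sub_props[of "gam r" R] g assms(1) by simp
  then have "gam (lam (st ?s)) = st ?s"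
    by (intro gam_lam) (auto simp: distinct_st set_st av_st)
  then show ?thesis unfolding trestr_def prestr_def by simp
qed

end
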